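(* For $N\in\mathbb{N}$ and $z,w\in\mathbb{C}$ let $K_N(z,w)=\sum_{m=0}^{N-1}\frac{N^m}{m!}(z\overline w)^m$. For every $\lambda\in(0,1)$ there are a constant $C(\lambda)>0$ and a constant $\delta(\lambda)\in(0,1)$ such that for all $N\in\mathbb{N}$ and all $z,w\in\mathbb{C}$ with $|z|,|w|<\lambda$, $$\big|e^{Nz\overline w}-K_N(z,w)\big|\le C\,\frac{e^{N|z\overline w|}}{\sqrt N}\,\delta^N .$$ *)

theory Defs
  imports "HOL-Analysis.Analysis"
begin

definition K :: "nat \<Rightarrow> complex \<Rightarrow> complex \<Rightarrow> complex" where
  "K N z w = (\<Sum>m<N. of_nat N ^ m / of_nat (fact m) * (z * cnj w) ^ m)"

end

theory Submission
  imports Defs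
begin

lemma fact_pow_le: "fact N * real N ^ m \<le> fact (m + N)"
proof (induction m)
  case 0 then show ?case by simp
next
  case (Suc m)
  have "fact N * real N ^ Suc m = real N * (fact N * real N ^ m)" by simp
  also have "\<dots> \<le> real (Suc m + N) * fact (m + N)"
    by (rule mult_mono) (use Suc in auto)
  also have "\<dots> = fact (Suc m + N)" by simp
  finally show ?case .
qed

lemma K_eq: "K N z w = (\<Sum>m<N. (of_nat N * (z * cnj w)) ^ m /\<^sub>R fact m)"
  unfolding K_def
  by (rule sum.cong) (auto simp: scaleR_conv_of_real power_mult_distrib field_simps)

lemma tail_bound:
  fixes u :: complex
  assumes "norm u < 1" "N \<ge> 1"
  shows "norm (exp (of_nat N * u) - (\<Sum>m<N. (of_nat N * u) ^ m /\<^sub>R fact m))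
     \<le> (real N * norm u) ^ N / fact N / (1 - norm u)"
proof -
  let ?x = "norm u"
  let ?A = "(real N * ?x) ^ N / fact N"
  have s1: "(\<lambda>m. (of_nat N * u) ^ (m + N) /\<^sub>R fact (m + N)) sums
      (exp (of_nat N * u) - (\<Sum>m<N. (of_nat N * u) ^ m /\<^sub>R fact m))"
    using sums_split_initial_segment[OF exp_converges] by blast
  have s2: "(\<lambda>m. ?A * ?x ^ m) sums (?A * (1 / (1 - ?x)))"
    by (rule sums_mult) (rule geometric_sums, use assms in simp)
  have b: "norm ((of_nat N * u) ^ (m + N) /\<^sub>R fact (m + N)) \<le> ?A * ?x ^ m" for m
  proof -
    have "norm ((of_nat N * u) ^ (m + N) /\<^sub>R fact (m + N)) = (real N * ?x) ^ (m + N) / fact (m + N)"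
      by (simp add: norm_mult norm_power divide_inverse_commute)
    also have "\<dots> = (real N * ?x) ^ N * (real N ^ m * ?x ^ m) / fact (m + N)"
      by (simp add: power_add power_mult_distrib)
    also have "\<dots> \<le> (real N * ?x) ^ N * (real N ^ m * ?x ^ m) / (fact N * real N ^ m)"
      by (rule divide_left_mono[OF fact_pow_le]) (use assms in auto)
    also have "\<dots> = ?A * ?x ^ m"
      using assms by (simp add: field_simps)
    finally show ?thesis .
  qed
  have "norm (exp (of_nat N * u) - (\<Sum>m<N. (of_nat N * u) ^ m /\<^sub>R fact m)) \<le> ?A * (1 / (1 - ?x))"
    by (rule norm_sums_le[OF s1 s2 b])
  then show ?thesis by simp
qed

lemma pow_fact_le_exp: "real N ^ N / fact N \<le> exp (real N)"
proof -
  have "(\<lambda>n. real N ^ n /\<^sub>R fact n) sums exp (real N)" by (rule exp_converges)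
  then have sm: "summable (\<lambda>n. real N ^ n / fact n)" and eq: "exp (real N) = (\<Sum>n. real N ^ n / fact n)"
    by (auto simp: sums_iff divide_inverse_commute scaleR_conv_of_real)
  have "(\<Sum>n\<in>{N}. real N ^ n / fact n) \<le> (\<Sum>n. real N ^ n / fact n)"
    by (rule sum_le_suminf[OF sm]) auto
  then show ?thesis using eq by simp
qed

lemma xexp_mono:
  fixes x r :: real
  assumes "0 \<le> x" "x \<le> r" "r \<le> 1"
  shows "x * exp (1 - x) \<le> r * exp (1 - r)"
proof (cases "x = 0")
  case True then show ?thesis using assms by simp
next
  case False
  then have xp: "0 < x" using assms by simp
  have "1 - (r - x) \<le> exp (x - r)" using exp_ge_add_one_self[of "x - r"] by linarith
  moreover have "x / r \<le> 1 - (r - x)"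
  proof -
    have "x \<le> r * (1 - (r - x))" 
    proof -
      have "x * (1 - r) \<le> r * (1 - r)" by (rule mult_right_mono) (use assms in auto)
      then show ?thesis by (simp add: algebra_simps)
    qed
    then show ?thesis using assms xp by (simp add: divide_le_eq mult.commute)
  qed
  ultimately have "x / r \<le> exp (x - r)" by linarith
  then have "x \<le> r * exp (x - r)" using assms xp by (simp add: divide_le_eq mult.commute)
  then have "x * exp (1 - x) \<le> r * exp (x - r) * exp (1 - x)" by simp
  also have "\<dots> = r * exp (1 - r)" by (simp add: mult.assoc flip: exp_add)
  finally show ?thesis .
qed

lemma n_pow_le:
  fixes q :: real
  assumes "0 \<le> q" "q < 1"
  shows "real N * q ^ N \<le> 1 / (1 - q)"
proof -
  have "real N * q ^ N = (\<Sum>k<N. q ^ N)" by simp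
  also have "\<dots> \<le> (\<Sum>k<N. q ^ k)"
    by (rule sum_mono) (use assms in \<open>auto intro: power_decreasing\<close>)
  also have "\<dots> \<le> (\<Sum>k. q ^ k)"
    by (rule sum_le_suminf) (use assms in auto)
  also have "\<dots> = 1 / (1 - q)" using suminf_geometric[of q] assms by simp
  finally show ?thesis .
qed


lemma rho_lt1:
  fixes r :: real
  assumes "0 < r" "r < 1"
  shows "r * exp (1 - r) < 1"
proof -
  let ?y = "r - 1"
  have "1 + ?y / 2 \<le> exp (?y / 2)" by (rule exp_ge_add_one_self)
  moreover have "0 \<le> 1 + ?y / 2" using assms by (simp add: field_simps)
  ultimately have "(1 + ?y / 2)^2 \<le> exp (?y / 2) ^ 2" by (rule power_mono)
  also have "exp (?y / 2) ^ 2 = exp ?y" by (simp add: power2_eq_square flip: exp_add)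
  finally have "(1 + ?y / 2)^2 \<le> exp ?y" .
  moreover have "1 + ?y < (1 + ?y / 2)^2"
  proof -
    have h: "0 < (r - 1) * (r - 1)" using assms by (intro mult_neg_neg) auto
    show ?thesis using h by (simp add: power2_eq_square algebra_simps)
  qed
  ultimately have "r < exp (r - 1)" by simp
  then have "r * exp (1 - r) < exp (r - 1) * exp (1 - r)" by simp
  also have "\<dots> = 1" by (simp flip: exp_add)
  finally show ?thesis .
qed

theorem lemma4p5:
  fixes lam :: real
  assumes "0 < lam" and "lam < 1"
  shows "\<exists>C \<delta>. C > 0 \<and> 0 < \<delta> \<and> \<delta> < 1 \<and>
    (\<forall>N::nat. N \<ge> 1 \<longrightarrow> (\<forall>z w :: complex. norm z < lam \<longrightarrow> norm w < lam \<longrightarrow>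
       norm (exp (of_nat N * z * cnj w) - K N z w)
         \<le> C * exp (real N * norm (z * cnj w)) / sqrt (real N) * \<delta> ^ N))"
proof -
  define r where "r = lam ^ 2"
  have r0: "0 < r" and r1: "r < 1" using assms by (auto simp: r_def power_less_one_iff)
  define \<rho> where "\<rho> = r * exp (1 - r)"
  have \<rho>0: "0 < \<rho>" and \<rho>1: "\<rho> < 1" using r0 r1 rho_lt1 by (auto simp: \<rho>_def)
  define q where "q = sqrt \<rho>"
  have q0: "0 < q" and q1: "q < 1" using \<rho>0 \<rho>1 by (auto simp: q_def)
  have qq: "q * q = \<rho>" using \<rho>0 by (simp add: q_def)
  define C where "C = 1 / ((1 - r) * (1 - q))"
  have C0: "C > 0" using r1 q1 by (simp add: C_def)
  show ?thesis
  proof (intro exI conjI allI impI)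
    fix N :: nat and z w :: complex
    assume N1: "N \<ge> 1" and zl: "norm z < lam" and wl: "norm w < lam"
    define u where "u = z * cnj w"
    define x where "x = norm u"
    have x0: "0 \<le> x" by (simp add: x_def)
    have xr: "x < r" unfolding x_def u_def r_def
      using zl wl by (auto simp: norm_mult power2_eq_square intro: mult_strict_mono')
    have x1: "x < 1" using xr r1 by simp
    have e1: "exp (of_nat N * z * cnj w) - K N z w
        = exp (of_nat N * u) - (\<Sum>m<N. (of_nat N * u) ^ m /\<^sub>R fact m)"
      by (simp add: K_eq u_def mult.assoc)
    have "norm (exp (of_nat N * z * cnj w) - K N z w) \<le> (real N * x) ^ N / fact N / (1 - x)"
      unfolding e1 x_def by (rule tail_bound) (use x1 N1 in \<open>auto simp: x_def\<close>)
    also have "\<dots> = (real N ^ N / fact N) * x ^ N / (1 - x)"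
      by (simp add: power_mult_distrib)
    also have "\<dots> \<le> exp (real N) * x ^ N / (1 - r)"
    proof -
      have "(real N ^ N / fact N) * x ^ N \<le> exp (real N) * x ^ N"
        by (rule mult_right_mono[OF pow_fact_le_exp]) (use x0 in simp)
      moreover have "0 \<le> exp (real N) * x ^ N" using x0 by simp
      ultimately show ?thesis using xr x1 r1 x0
        by (intro divide_mono) auto
    qed
    also have "exp (real N) * x ^ N = (x * exp (1 - x)) ^ N * exp (real N * x)"
    proof -
      have "(x * exp (1 - x)) ^ N * exp (real N * x) = x ^ N * (exp (1 - x) ^ N * exp (real N * x))"
        by (simp add: power_mult_distrib)
      also have "exp (1 - x) ^ N * exp (real N * x) = exp (real N)"
        by (simp add: algebra_simps flip: exp_of_nat_mult exp_add)
      finally show ?thesis by simp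
    qed
    also have "(x * exp (1 - x)) ^ N * exp (real N * x) / (1 - r) \<le> \<rho> ^ N * exp (real N * x) / (1 - r)"
    proof -
      have "(x * exp (1 - x)) ^ N \<le> \<rho> ^ N"
        by (rule power_mono) (use xexp_mono[of x r] x0 xr r1 in \<open>auto simp: \<rho>_def\<close>)
      then show ?thesis using r1 by (simp add: divide_right_mono)
    qed
    also have "\<dots> = (sqrt (real N) * q ^ N) * (q ^ N * exp (real N * x) / (1 - r)) / sqrt (real N)"
      using N1 by (simp add: qq[symmetric] power_mult_distrib)
    also have "\<dots> \<le> (1 / (1 - q)) * (q ^ N * exp (real N * x) / (1 - r)) / sqrt (real N)"
    proof -
      have "sqrt (real N) \<le> real N"
      proof -
        have "real N \<le> real N * real N" using N1 by simp
        then show ?thesis using N1 by (simp add: real_sqrt_le_iff' power2_eq_square)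
      qed
      then have "sqrt (real N) * q ^ N \<le> real N * q ^ N" using q0 by (simp add: mult_right_mono)
      also have "\<dots> \<le> 1 / (1 - q)" by (rule n_pow_le) (use q0 q1 in auto)
      finally have "sqrt (real N) * q ^ N \<le> 1 / (1 - q)" .
      then show ?thesis using r1 q0
        by (intro divide_right_mono mult_right_mono) auto
    qed
    also have "\<dots> = C * exp (real N * norm (z * cnj w)) / sqrt (real N) * q ^ N"
      by (simp add: C_def x_def u_def field_simps)
    finally show "norm (exp (of_nat N * z * cnj w) - K N z w)
         \<le> C * exp (real N * norm (z * cnj w)) / sqrt (real N) * q ^ N" .
  qed (use C0 q0 q1 in auto)
qed

end
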